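(* Let $\mathcal{T}\subset\mathcal{D}$ be a tree and $\mu,\nu$ finite Borel measures on $[0,1)$ such that (A) $\mu(\mathbf{Top}(\mathcal{T}))>0$ and $\nu(\mathbf{Top}(\mathcal{T}))>0$, and (B) both $\mu$ and $\nu$ are $(\mathcal{T},D)$-doubling for some $D\ge1$. Define $$\nu_{\mathcal{T}} := \nu|_{\partial\mathcal{T}} + \sum_{I\in\mathbf{Leaves}(\mathcal{T})}\frac{\nu(I)}{\mu(I)}\,\mu|_I.$$ If $$\sum_{I\in\mathcal{T}\setminus\mathbf{Leaves}(\mathcal{T})}\Delta^2_{\mu,\nu}(I)\mu(I)<\infty,$$ then $\mu|_{\mathbf{Top}(\mathcal{T})}\ll\nu_{\mathcal{T}}$. In particular $\mu|_{\partial\mathcal{T}}\ll\nu$.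
   Context: $\mathcal{D}$: dyadic intervals $[j2^{-k},(j+1)2^{-k})\subset[0,1)$, $k\ge0$; $\hat I$ is the parent of $I$, and $I_-,I_+$ are the left and right halves of $I$. $\Delta_{\mu,\nu}(I) := |\mu(I_-)/\mu(I) - \nu(I_-)/\nu(I)|$. A tree is a family $\mathcal{T}\subset\mathcal{D}$ that is coherent (if $Q,R\in\mathcal{T}$, $P\in\mathcal{D}$, $Q\subset P\subset R$, then $P\in\mathcal{T}$), has a unique largest element $\mathbf{Top}(\mathcal{T})$, and in which every $I\in\mathcal{T}$ has either $0$ or $2$ children in $\mathcal{T}$. $\mathbf{Leaves}(\mathcal{T})$ is the set of $I\in\mathcal{T}$ with no children in $\mathcal{T}$ (also used for the union of these intervals), and $\partial\mathcal{T} := \mathbf{Top}(\mathcal{T})\setminus\bigcup\mathbf{Leaves}(\mathcal{T})$. A measure $\sigma$ is $(\mathcal{T},D)$-doubling if $\sigma(\hat I)\le D\sigma(I)$ for all $I\in\mathcal{T}\setminus\{\mathbf{Top}(\mathcal{T})\}$ (under (A),(B), $\mu(I),\nu(I)>0$ for all $I\in\mathcal{T}$). *)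

theory Defs
  imports "HOL-Analysis.Analysis"
begin

text \<open>Dyadic intervals are encoded by pairs (k, j) with j < 2^k, standing for
  the half-open interval [j 2^-k, (j+1) 2^-k).\<close>

definition dyadic :: "(nat \<times> nat) set" where
  "dyadic = {(k, j). j < 2 ^ k}"

definition dyset :: "nat \<times> nat \<Rightarrow> real set" where
  "dyset I = {real (snd I) / 2 ^ fst I ..< (real (snd I) + 1) / 2 ^ fst I}"

definition dleft :: "nat \<times> nat \<Rightarrow> nat \<times> nat" where
  "dleft I = (Suc (fst I), 2 * snd I)"

definition dright :: "nat \<times> nat \<Rightarrow> nat \<times> nat" where
  "dright I = (Suc (fst I), 2 * snd I + 1)"

definition dparent :: "nat \<times> nat \<Rightarrow> nat \<times> nat" where
  "dparent I = (fst I - 1, snd I div 2)"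

definition is_tree :: "(nat \<times> nat) set \<Rightarrow> bool" where
  "is_tree T \<longleftrightarrow> T \<subseteq> dyadic
     \<and> (\<forall>Q\<in>T. \<forall>R\<in>T. \<forall>P\<in>dyadic. dyset Q \<subseteq> dyset P \<and> dyset P \<subseteq> dyset R \<longrightarrow> P \<in> T)
     \<and> (\<exists>Tp\<in>T. \<forall>I\<in>T. dyset I \<subseteq> dyset Tp)
     \<and> (\<forall>I\<in>T. (dleft I \<in> T \<longleftrightarrow> dright I \<in> T))"

definition tree_top :: "(nat \<times> nat) set \<Rightarrow> nat \<times> nat" where
  "tree_top T = (THE Tp. Tp \<in> T \<and> (\<forall>I\<in>T. dyset I \<subseteq> dyset Tp))"

definition leaves :: "(nat \<times> nat) set \<Rightarrow> (nat \<times> nat) set" where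
  "leaves T = {I \<in> T. dleft I \<notin> T \<and> dright I \<notin> T}"

definition tree_boundary :: "(nat \<times> nat) set \<Rightarrow> real set" where
  "tree_boundary T = dyset (tree_top T) - (\<Union>I\<in>leaves T. dyset I)"

definition doubling_on_tree :: "real measure \<Rightarrow> (nat \<times> nat) set \<Rightarrow> real \<Rightarrow> bool" where
  "doubling_on_tree \<sigma> T D \<longleftrightarrow>
     (\<forall>I \<in> T - {tree_top T}. measure \<sigma> (dyset (dparent I)) \<le> D * measure \<sigma> (dyset I))"

definition Delta :: "real measure \<Rightarrow> real measure \<Rightarrow> nat \<times> nat \<Rightarrow> real" where
  "Delta \<mu> \<nu> I = \<bar>measure \<mu> (dyset (dleft I)) / measure \<mu> (dyset I)
                 - measure \<nu> (dyset (dleft I)) / measure \<nu> (dyset I)\<bar>"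

definition measure_add :: "'a measure \<Rightarrow> 'a measure \<Rightarrow> 'a measure" where
  "measure_add M N = measure_of (space M) (sets M) (\<lambda>A. emeasure M A + emeasure N A)"

definition restr :: "'a measure \<Rightarrow> 'a set \<Rightarrow> 'a measure" where
  "restr M A = density M (indicator A)"

text \<open>nu_T = nu|_{boundary T} + sum over leaves I of (nu(I)/mu(I)) mu|_I\<close>
definition nu_T :: "real measure \<Rightarrow> real measure \<Rightarrow> (nat \<times> nat) set \<Rightarrow> real measure" where
  "nu_T \<mu> \<nu> T = measure_add (restr \<nu> (tree_boundary T))
      (density \<mu> (\<lambda>x. \<integral>\<^sup>+ I. ennreal (measure \<nu> (dyset I) / measure \<mu> (dyset I))
                          * indicator (dyset I) x \<partial>count_space (leaves T)))"

end

theory Submission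
  imports Defs
begin


lemma dyset_eq: "dyset (k,j) = {real j / 2^k ..< (real j + 1) / 2^k}"
  by (simp add: dyset_def)

lemma dyset_lt: "real j / 2^k < (real j + 1) / 2^k"
  by (simp add: divide_strict_right_mono)

lemma dyset_ne: "dyset I \<noteq> {}"
  by (cases I) (simp add: dyset_eq dyset_lt)

lemma dyset_inj: assumes "dyset I = dyset J" shows "I = J"
proof -
  obtain k j k' j' where I: "I = (k,j)" and J: "J = (k',j')" by (cases I, cases J)
  have e: "real j / 2^k = real j' / 2^k'" "(real j + 1) / 2^k = (real j' + 1) / 2^k'"
    using assms atLeastLessThan_eq_iff[OF dyset_lt dyset_lt] unfolding I J dyset_eq by blast+
  have "1 / (2::real)^k = 1 / 2^k'" using e by (simp add: add_divide_distrib)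
  hence "(2::real)^k = 2^k'" by simp
  hence "k = k'" by (metis power_inject_exp one_less_numeral_iff semiring_norm(76) of_nat_numeral)
  with e have "j = j'" by (simp add: divide_cancel_right)
  with \<open>k = k'\<close> show ?thesis using I J by simp
qed



lemma ivl_sub_iff: "(a::real) < b \<Longrightarrow> {a..<b} \<subseteq> {c..<d} \<longleftrightarrow> c \<le> a \<and> b \<le> d"
  using atLeastLessThan_subset_iff[of a b c d] by auto

lemma aux_div: "(a::real) > 0 \<Longrightarrow> b > 0 \<Longrightarrow> (x / a \<le> y / (a * b) \<longleftrightarrow> x * b \<le> y) \<and> (y / (a*b) \<le> x / a \<longleftrightarrow> y \<le> x * b)"
  by (auto simp: field_simps)

lemma dyset_sub_iff:
  assumes "k' \<le> k"
  shows "dyset (k,j) \<subseteq> dyset (k',j') \<longleftrightarrow> j' * 2^(k-k') \<le> j \<and> j + 1 \<le> (j'+1) * 2^(k-k')"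
proof -
  obtain e where k: "k = k' + e" using assms le_Suc_ex by blast
  have p: "(2::real)^k = 2^k' * 2^e" by (simp add: k power_add)
  have "dyset (k,j) \<subseteq> dyset (k',j') \<longleftrightarrow> real j' / 2^k' \<le> real j / 2^k \<and> (real j + 1) / 2^k \<le> (real j' + 1) / 2^k'"
    unfolding dyset_eq by (simp only: ivl_sub_iff[OF dyset_lt])
  also have "\<dots> \<longleftrightarrow> real j' * 2^e \<le> real j \<and> real j + 1 \<le> (real j' + 1) * 2^e"
    unfolding p using aux_div[of "2^k'" "2^e" "real j'" "real j"] aux_div[of "2^k'" "2^e" "real j' + 1" "real j + 1"]
    by (simp add: mult.commute)
  also have "\<dots> \<longleftrightarrow> j' * 2^e \<le> j \<and> j + 1 \<le> (j'+1) * 2^e"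
    by (metis (mono_tags, lifting) of_nat_1 of_nat_add of_nat_le_iff of_nat_mult of_nat_numeral of_nat_power)
  finally show ?thesis by (simp add: k)
qed

lemma dyset_sub_le:
  assumes "dyset (k,j) \<subseteq> dyset (k',j')" shows "k' \<le> k"
proof (rule ccontr)
  assume "\<not> k' \<le> k"
  hence "(2::real)^k < 2^k'" by simp
  have a: "real j' / 2^k' \<le> real j / 2^k \<and> (real j + 1) / 2^k \<le> (real j' + 1) / 2^k'"
    using assms unfolding dyset_eq by (simp only: ivl_sub_iff[OF dyset_lt])
  hence "1 / (2::real)^k \<le> 1 / 2^k'" by (simp add: add_divide_distrib)
  moreover have "1/(2::real)^k' < 1/2^k" using \<open>(2::real)^k < 2^k'\<close> by (intro divide_strict_left_mono) auto
  ultimately show False by simp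
qed

lemma dparent_dleft[simp]: "dparent (dleft I) = I"
  by (simp add: dparent_def dleft_def)
lemma dparent_dright[simp]: "dparent (dright I) = I"
  by (simp add: dparent_def dright_def)
lemma fst_dleft[simp]: "fst (dleft I) = Suc (fst I)" by (simp add: dleft_def)
lemma fst_dright[simp]: "fst (dright I) = Suc (fst I)" by (simp add: dright_def)
lemma dleft_ne_dright: "dleft I \<noteq> dright J" by (simp add: dleft_def dright_def) presburger
lemma dleft_inj: "dleft I = dleft J \<Longrightarrow> I = J" by (metis dparent_dleft)
lemma dright_inj: "dright I = dright J \<Longrightarrow> I = J" by (metis dparent_dright)

lemma dyset_split: "dyset I = dyset (dleft I) \<union> dyset (dright I)"
  and dyset_split_disj: "dyset (dleft I) \<inter> dyset (dright I) = {}"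
proof -
  obtain k j where I: "I = (k,j)" by (cases I)
  have a: "real (2*j) / 2^(Suc k) = real j / 2^k" by simp
  have b: "(real (2*j) + 1) / 2^(Suc k) = real (2*j+1) / 2^(Suc k)" by simp
  have c: "(real (2*j+1) + 1) / 2^(Suc k) = (real j + 1) / 2^k" by (simp add: field_simps)
  have le1: "real j / 2^k \<le> real (2*j+1) / 2^(Suc k)" by (simp add: field_simps)
  have le2: "real (2*j+1) / 2^(Suc k) \<le> (real j + 1) / 2^k" by (simp add: field_simps)
  show "dyset I = dyset (dleft I) \<union> dyset (dright I)"
    unfolding I dleft_def dright_def dyset_def using le1 le2 by (simp only: fst_conv snd_conv a b c) (auto)
  show "dyset (dleft I) \<inter> dyset (dright I) = {}"
    unfolding I dleft_def dright_def dyset_def by (simp only: fst_conv snd_conv a b c) auto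
qed

lemma dyset_child_sub: "dyset (dleft I) \<subseteq> dyset I" "dyset (dright I) \<subseteq> dyset I"
  using dyset_split[of I] by auto

lemma dyset_diam:
  assumes "x \<in> dyset I" "y \<in> dyset I" shows "\<bar>x - y\<bar> < 1 / 2^(fst I)"
proof -
  obtain k j where I: "I = (k,j)" by (cases I)
  have "(real j + 1) / 2^k - real j / 2^k = 1 / 2^k" by (simp add: field_simps)
  thus ?thesis using assms unfolding I dyset_eq by auto
qed

lemma dyset_parent:
  assumes "I \<in> dyadic" "R \<in> dyadic" "dyset I \<subseteq> dyset R" "I \<noteq> R"
  shows "fst R < fst I" "dparent I \<in> dyadic" "dyset (dparent I) \<subseteq> dyset R" "dyset I \<subseteq> dyset (dparent I)"
proof -
  obtain k j k' j' where I: "I = (k,j)" and R: "R = (k',j')" by (cases I, cases R)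
  have le: "k' \<le> k" using dyset_sub_le assms(3) I R by simp
  have "k' \<noteq> k"
  proof
    assume "k' = k"
    with dyset_sub_iff[OF le] assms(3) have "j' \<le> j" "j + 1 \<le> j' + 1" using I R by auto
    with \<open>k'=k\<close> assms(4) I R show False by simp
  qed
  with le have lt: "k' < k" by simp
  then show "fst R < fst I" using I R by simp
  obtain d where kd: "k = Suc (k' + d)" using lt less_iff_Suc_add by auto
  have ij: "j' * 2^(Suc d) \<le> j" "j + 1 \<le> (j'+1) * 2^(Suc d)"
    using dyset_sub_iff[OF le] assms(3) I R kd by (auto simp: Suc_diff_le)
  have p: "dparent I = (k' + d, j div 2)" using I kd by (simp add: dparent_def)
  have "j' * 2^d \<le> j div 2" using ij(1) by (metis div_le_mono mult.assoc mult.commute nonzero_mult_div_cancel_left power_Suc zero_neq_numeral)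
  moreover have "j div 2 + 1 \<le> (j'+1) * 2^d"
  proof -
    have "j < (j'+1) * 2^d * 2" using ij(2) by (simp add: mult.commute mult.left_commute)
    hence "j div 2 < (j'+1) * 2^d" by (simp add: less_mult_imp_div_less)
    thus ?thesis by simp
  qed
  ultimately show "dyset (dparent I) \<subseteq> dyset R" unfolding p R using dyset_sub_iff[of k' "k'+d"] by simp
  show "dparent I \<in> dyadic" using assms(1) I kd p by (auto simp: dyadic_def less_mult_imp_div_less)
  have "I = dleft (dparent I) \<or> I = dright (dparent I)"
    unfolding p I dleft_def dright_def dparent_def using kd by (simp, presburger)
  thus "dyset I \<subseteq> dyset (dparent I)" using dyset_child_sub by metis
qed



lemma tree_top_props:
  assumes "is_tree T"
  shows "tree_top T \<in> T" "\<And>I. I \<in> T \<Longrightarrow> dyset I \<subseteq> dyset (tree_top T)"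
proof -
  have "\<exists>Tp\<in>T. \<forall>I\<in>T. dyset I \<subseteq> dyset Tp" using assms unfolding is_tree_def by (elim conjE)
  then obtain Tp where Tp: "Tp \<in> T" "\<forall>I\<in>T. dyset I \<subseteq> dyset Tp" by blast
  have "\<exists>!Tp. Tp \<in> T \<and> (\<forall>I\<in>T. dyset I \<subseteq> dyset Tp)"
  proof (rule ex1I[of _ Tp])
    show "Tp \<in> T \<and> (\<forall>I\<in>T. dyset I \<subseteq> dyset Tp)" using Tp by blast
    fix R assume "R \<in> T \<and> (\<forall>I\<in>T. dyset I \<subseteq> dyset R)"
    hence "dyset R = dyset Tp" using Tp by blast
    thus "R = Tp" by (rule dyset_inj)
  qed
  hence "tree_top T \<in> T \<and> (\<forall>I\<in>T. dyset I \<subseteq> dyset (tree_top T))"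
    unfolding tree_top_def by (rule theI')
  thus "tree_top T \<in> T" "\<And>I. I \<in> T \<Longrightarrow> dyset I \<subseteq> dyset (tree_top T)" by auto
qed

lemma tree_parent:
  assumes "is_tree T" "I \<in> T" "I \<noteq> tree_top T"
  shows "dparent I \<in> T" "fst (tree_top T) < fst I" "fst (dparent I) = fst I - 1"
proof -
  have dy: "T \<subseteq> dyadic" using assms(1) unfolding is_tree_def by blast
  note tp = tree_top_props[OF assms(1)]
  have par: "fst (tree_top T) < fst I" "dparent I \<in> dyadic" "dyset (dparent I) \<subseteq> dyset (tree_top T)"
    "dyset I \<subseteq> dyset (dparent I)"
    using dyset_parent[of I "tree_top T"] dy assms tp by auto
  have coh: "\<forall>Q\<in>T. \<forall>R\<in>T. \<forall>P\<in>dyadic. dyset Q \<subseteq> dyset P \<and> dyset P \<subseteq> dyset R \<longrightarrow> P \<in> T"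
    using assms(1) unfolding is_tree_def by (elim conjE)
  show "dparent I \<in> T"
    using coh[rule_format, OF assms(2) tp(1) par(2)] par(3,4) by simp
  show "fst (tree_top T) < fst I" by (fact par(1))
  show "fst (dparent I) = fst I - 1" by (simp add: dparent_def)
qed

lemma tree_fst_ge:
  assumes "is_tree T" "I \<in> T" shows "fst (tree_top T) \<le> fst I"
proof (cases "I = tree_top T")
  case True then show ?thesis by simp
next
  case False then show ?thesis using tree_parent(2)[OF assms False] by simp
qed

lemma tree_children:
  assumes "is_tree T" "I \<in> T" "I \<notin> leaves T"
  shows "dleft I \<in> T" "dright I \<in> T"
proof -
  have "\<forall>I\<in>T. (dleft I \<in> T \<longleftrightarrow> dright I \<in> T)" using assms(1) unfolding is_tree_def by (elim conjE)
  hence "dleft I \<in> T \<longleftrightarrow> dright I \<in> T" using assms(2) by blast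
  moreover have "dleft I \<in> T \<or> dright I \<in> T" using assms(2,3) unfolding leaves_def by blast
  ultimately show "dleft I \<in> T" "dright I \<in> T" by blast+
qed

lemma tree_pos:
  assumes "is_tree T" "doubling_on_tree \<sigma> T D" "measure \<sigma> (dyset (tree_top T)) > 0" "D \<ge> 1"
  shows "I \<in> T \<Longrightarrow> measure \<sigma> (dyset I) > 0"
proof -
  have "\<forall>I\<in>T. fst I = fst (tree_top T) + n \<longrightarrow> measure \<sigma> (dyset I) > 0" for n
  proof (induction n)
    case 0
    show ?case
    proof (intro ballI impI)
      fix I assume "I \<in> T" "fst I = fst (tree_top T) + 0"
      have "I = tree_top T"
      proof (rule ccontr)
        assume "I \<noteq> tree_top T"
        from tree_parent(2)[OF assms(1) \<open>I \<in> T\<close> this] \<open>fst I = _\<close> show False by simp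
      qed
      thus "measure \<sigma> (dyset I) > 0" using assms(3) by simp
    qed
  next
    case (Suc n)
    show ?case
    proof (intro ballI impI)
      fix I assume I: "I \<in> T" "fst I = fst (tree_top T) + Suc n"
      hence ne: "I \<noteq> tree_top T" by auto
      note p = tree_parent[OF assms(1) I(1) ne]
      have "measure \<sigma> (dyset (dparent I)) > 0" using Suc p I by auto
      moreover have "measure \<sigma> (dyset (dparent I)) \<le> D * measure \<sigma> (dyset I)"
        using assms(2) I ne unfolding doubling_on_tree_def by blast
      ultimately show "measure \<sigma> (dyset I) > 0"
      proof -
        assume a: "measure \<sigma> (dyset (dparent I)) > 0" "measure \<sigma> (dyset (dparent I)) \<le> D * measure \<sigma> (dyset I)"
        show ?thesis
        proof (rule ccontr)
          assume "\<not> measure \<sigma> (dyset I) > 0"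
          hence "measure \<sigma> (dyset I) \<le> 0" by simp
          hence "D * measure \<sigma> (dyset I) \<le> 0" using assms(4) by (simp add: mult_nonneg_nonpos)
          thus False using a by linarith
        qed
      qed
    qed
  qed
  moreover assume "I \<in> T"
  moreover obtain n where "fst I = fst (tree_top T) + n" using tree_fst_ge[OF assms(1) \<open>I \<in> T\<close>] le_Suc_ex by blast
  ultimately show ?thesis by blast
qed



fun Pset :: "(nat \<times> nat) set \<Rightarrow> nat \<Rightarrow> (nat \<times> nat) set" where
  "Pset T 0 = {tree_top T}"
| "Pset T (Suc n) = (Pset T n \<inter> leaves T) \<union> dleft ` (Pset T n - leaves T) \<union> dright ` (Pset T n - leaves T)"

lemma Pset_Suc_origin:
  assumes "I \<in> Pset T (Suc n)"
  obtains q where "q \<in> Pset T n" "(q \<in> leaves T \<and> I = q) \<or> (q \<notin> leaves T \<and> (I = dleft q \<or> I = dright q))"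
proof -
  have "I \<in> Pset T n \<inter> leaves T \<or> I \<in> dleft ` (Pset T n - leaves T) \<or> I \<in> dright ` (Pset T n - leaves T)"
    using assms by simp
  then show thesis
  proof (elim disjE)
    assume "I \<in> Pset T n \<inter> leaves T" then show thesis using that[of I] by blast
  next
    assume "I \<in> dleft ` (Pset T n - leaves T)" then obtain q where "q \<in> Pset T n - leaves T" "I = dleft q" by blast
    then show thesis using that[of q] by blast
  next
    assume "I \<in> dright ` (Pset T n - leaves T)" then obtain q where "q \<in> Pset T n - leaves T" "I = dright q" by blast
    then show thesis using that[of q] by blast
  qed
qed

lemma leaves_sub: "leaves T \<subseteq> T" by (auto simp: leaves_def)

context
  fixes T assumes tree: "is_tree T"
begin

lemma Pset_props: "Pset T n \<subseteq> T \<and> finite (Pset T n) \<and>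
   (\<forall>I \<in> Pset T n. fst I \<le> fst (tree_top T) + n \<and> (I \<notin> leaves T \<longrightarrow> fst I = fst (tree_top T) + n))"
proof (induction n)
  case 0
  then show ?case using tree_top_props[OF tree] by simp
next
  case (Suc n)
  have sub: "Pset T (Suc n) \<subseteq> T"
    using Suc tree_children[OF tree] leaves_sub by auto
  moreover have "finite (Pset T (Suc n))" using Suc by simp
  moreover have "\<forall>I \<in> Pset T (Suc n). fst I \<le> fst (tree_top T) + Suc n \<and> (I \<notin> leaves T \<longrightarrow> fst I = fst (tree_top T) + Suc n)"
  proof
    fix I assume I: "I \<in> Pset T (Suc n)"
    then obtain q where q: "q \<in> Pset T n" "(q \<in> leaves T \<and> I = q) \<or> (q \<notin> leaves T \<and> (I = dleft q \<or> I = dright q))"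
      by (rule Pset_Suc_origin)
    then show "fst I \<le> fst (tree_top T) + Suc n \<and> (I \<notin> leaves T \<longrightarrow> fst I = fst (tree_top T) + Suc n)"
    proof (elim disjE conjE)
      assume "q \<in> leaves T" "I = q" thus ?thesis using Suc q by auto
    next
      assume "q \<notin> leaves T" "I = dleft q" thus ?thesis using Suc q by auto
    next
      assume "q \<notin> leaves T" "I = dright q" thus ?thesis using Suc q by auto
    qed
  qed
  ultimately show ?case by blast
qed

lemma Pset_sub: "Pset T n \<subseteq> T" using Pset_props by blast
lemma Pset_finite: "finite (Pset T n)" using Pset_props by blast
lemma Pset_fst: "I \<in> Pset T n \<Longrightarrow> fst I \<le> fst (tree_top T) + n"
  using Pset_props by blast
lemma Pset_fst_nl: "I \<in> Pset T n \<Longrightarrow> I \<notin> leaves T \<Longrightarrow> fst I = fst (tree_top T) + n"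
  using Pset_props by blast

lemma Pset_disj: "I \<in> Pset T n \<Longrightarrow> J \<in> Pset T n \<Longrightarrow> I \<noteq> J \<Longrightarrow> dyset I \<inter> dyset J = {}"
proof (induction n arbitrary: I J)
  case 0 then show ?case by simp
next
  case (Suc n)
  obtain q1 where q1: "q1 \<in> Pset T n" "(q1 \<in> leaves T \<and> I = q1) \<or> (q1 \<notin> leaves T \<and> (I = dleft q1 \<or> I = dright q1))"
    using Suc.prems(1) by (rule Pset_Suc_origin)
  obtain q2 where q2: "q2 \<in> Pset T n" "(q2 \<in> leaves T \<and> J = q2) \<or> (q2 \<notin> leaves T \<and> (J = dleft q2 \<or> J = dright q2))"
    using Suc.prems(2) by (rule Pset_Suc_origin)
  have s1: "dyset I \<subseteq> dyset q1" using q1(2) dyset_child_sub[of q1] by blast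
  have s2: "dyset J \<subseteq> dyset q2" using q2(2) dyset_child_sub[of q2] by blast
  show ?case
  proof (cases "q1 = q2")
    case False
    then show ?thesis using Suc.IH[OF q1(1) q2(1)] s1 s2 by blast
  next
    case True
    then show ?thesis using q1(2) q2(2) Suc.prems(3) dyset_split_disj[of q1] by auto
  qed
qed

lemma Pset_boundary: "x \<in> tree_boundary T \<Longrightarrow> \<exists>J \<in> Pset T n - leaves T. x \<in> dyset J"
proof (induction n)
  case 0
  then show ?case using tree_top_props[OF tree] unfolding tree_boundary_def by auto
next
  case (Suc n)
  then obtain J where J: "J \<in> Pset T n - leaves T" "x \<in> dyset J" by blast
  hence "x \<in> dyset (dleft J) \<or> x \<in> dyset (dright J)" using dyset_split by blast
  moreover have "dleft J \<in> T" "dright J \<in> T" using tree_children[OF tree] J Pset_sub by blast+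
  moreover have "\<And>K. K \<in> leaves T \<Longrightarrow> x \<notin> dyset K" using Suc.prems unfolding tree_boundary_def by blast
  ultimately show ?case
  proof (elim disjE)
    assume x: "x \<in> dyset (dleft J)"
    hence "dleft J \<notin> leaves T" using \<open>\<And>K. K \<in> leaves T \<Longrightarrow> x \<notin> dyset K\<close> by blast
    moreover have "dleft J \<in> Pset T (Suc n)" using J by simp
    ultimately show ?thesis using x by blast
  next
    assume x: "x \<in> dyset (dright J)"
    hence "dright J \<notin> leaves T" using \<open>\<And>K. K \<in> leaves T \<Longrightarrow> x \<notin> dyset K\<close> by blast
    moreover have "dright J \<in> Pset T (Suc n)" using J by simp
    ultimately show ?thesis using x by blast
  qed
qed

lemma Pset_Suc_sub: assumes "J \<in> Pset T (Suc n)" shows "\<exists>J' \<in> Pset T n. dyset J \<subseteq> dyset J'"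
proof -
  obtain q where q: "q \<in> Pset T n" "(q \<in> leaves T \<and> J = q) \<or> (q \<notin> leaves T \<and> (J = dleft q \<or> J = dright q))"
    using assms by (rule Pset_Suc_origin)
  have "dyset J \<subseteq> dyset q" using q(2) dyset_child_sub[of q] by blast
  thus ?thesis using q(1) by blast
qed

end


lemma ln_diff_le:
  assumes "(c::real) > 0" "x \<ge> c" "y \<ge> c"
  shows "ln x - ln y \<le> \<bar>x - y\<bar> / c"
proof -
  have xy: "x > 0" "y > 0" using assms by auto
  have "ln x - ln y = ln (x / y)" using xy by (simp add: ln_div)
  also have "\<dots> \<le> x / y - 1" using xy by (intro ln_le_minus_one) auto
  also have "\<dots> = (x - y) / y" using xy by (simp add: field_simps)
  also have "\<dots> \<le> \<bar>x - y\<bar> / y" using xy by (intro divide_right_mono) auto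
  also have "\<dots> \<le> \<bar>x - y\<bar> / c" using xy assms by (intro divide_left_mono) auto
  finally show ?thesis .
qed

lemma ln_diff_abs:
  assumes "(c::real) > 0" "x \<ge> c" "y \<ge> c"
  shows "\<bar>ln x - ln y\<bar> \<le> \<bar>x - y\<bar> / c"
  using ln_diff_le[OF assms] ln_diff_le[OF assms(1,3,2)] by (simp add: abs_minus_commute)

lemma kl_bounds:
  fixes a b D :: real
  assumes D: "D > 0" and a: "a \<ge> 1/D" "1 - a \<ge> 1/D" and b: "b \<ge> 1/D" "1 - b \<ge> 1/D"
  defines "xl \<equiv> ln b - ln a" and "xr \<equiv> ln (1-b) - ln (1-a)"
  shows "\<bar>xl\<bar> \<le> D * \<bar>a - b\<bar>" "\<bar>xr\<bar> \<le> D * \<bar>a - b\<bar>"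
    "0 \<le> -(a * xl + (1-a) * xr)" "-(a * xl + (1-a) * xr) \<le> D^2 * (a - b)^2"
proof -
  have c: "1/D > 0" using D by simp
  have e: "\<bar>x - y\<bar> / (1/D) = D * \<bar>x - y\<bar>" for x y using D by simp
  show "\<bar>xl\<bar> \<le> D * \<bar>a - b\<bar>" unfolding xl_def using ln_diff_abs[OF c b(1) a(1)] e by (simp add: abs_minus_commute mult.commute)
  show "\<bar>xr\<bar> \<le> D * \<bar>a - b\<bar>" unfolding xr_def using ln_diff_abs[OF c b(2) a(2)] e by (simp add: abs_minus_commute mult.commute)
  have pos: "a > 0" "1 - a > 0" "b > 0" "1 - b > 0" using a b c by linarith+
  have l1: "a * xl \<le> b - a"
  proof -
    have "xl = ln (b / a)" unfolding xl_def using pos by (simp add: ln_div)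
    also have "\<dots> \<le> b / a - 1" using pos by (intro ln_le_minus_one) auto
    finally have "a * xl \<le> a * (b / a - 1)" using pos by (intro mult_left_mono) auto
    moreover have "a * (b / a - 1) = b - a" using pos by (simp add: field_simps)
    ultimately show ?thesis by linarith
  qed
  have l2: "(1-a) * xr \<le> a - b"
  proof -
    have "xr = ln ((1-b) / (1-a))" unfolding xr_def using pos by (simp add: ln_div)
    also have "\<dots> \<le> (1-b) / (1-a) - 1" using pos by (intro ln_le_minus_one) auto
    finally have "(1-a) * xr \<le> (1-a) * ((1-b) / (1-a) - 1)" using pos by (intro mult_left_mono) auto
    moreover have "(1-a) * ((1-b) / (1-a) - 1) = a - b" using pos by (simp add: field_simps)
    ultimately show ?thesis by linarith
  qed
  show "0 \<le> -(a * xl + (1-a) * xr)" using l1 l2 by linarith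
  have u1: "- (a * xl) \<le> a * (a - b) / b"
  proof -
    have "-xl = ln (a / b)" unfolding xl_def using pos by (simp add: ln_div)
    also have "\<dots> \<le> a / b - 1" using pos by (intro ln_le_minus_one) auto
    finally have "a * (-xl) \<le> a * (a / b - 1)" using pos by (intro mult_left_mono) auto
    moreover have "a * (a / b - 1) = a * (a - b) / b" using pos by (simp add: field_simps)
    ultimately show ?thesis by linarith
  qed
  have u2: "- ((1-a) * xr) \<le> (1-a) * (b - a) / (1-b)"
  proof -
    have "-xr = ln ((1-a) / (1-b))" unfolding xr_def using pos by (simp add: ln_div)
    also have "\<dots> \<le> (1-a) / (1-b) - 1" using pos by (intro ln_le_minus_one) auto
    finally have "(1-a) * (-xr) \<le> (1-a) * ((1-a) / (1-b) - 1)" using pos by (intro mult_left_mono) auto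
    moreover have "(1-a) * ((1-a) / (1-b) - 1) = (1-a) * (b - a) / (1-b)" using pos by (simp add: field_simps)
    ultimately show ?thesis by linarith
  qed
  have eq: "a * (a - b) / b + (1-a) * (b - a) / (1-b) = (a - b)^2 / (b * (1-b))"
    using pos by (simp add: field_simps power2_eq_square)
  have "1 / (b * (1-b)) \<le> D^2"
  proof -
    have "b * (1-b) \<ge> (1/D) * (1/D)" using b c pos by (intro mult_mono) auto
    hence "1 / (b * (1-b)) \<le> 1 / ((1/D) * (1/D))" using c pos by (intro divide_left_mono) auto
    thus ?thesis by (simp add: power2_eq_square)
  qed
  hence "(1 / (b * (1-b))) * (a-b)^2 \<le> D^2 * (a - b)^2"
    by (rule mult_right_mono) simp
  hence "(a - b)^2 / (b * (1-b)) \<le> D^2 * (a - b)^2" by simp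
  thus "-(a * xl + (1-a) * xr) \<le> D^2 * (a - b)^2" using u1 u2 eq by linarith
qed

lemma var_step:
  fixes ml mr m M xl xr k B :: real
  assumes "ml + mr = m" "ml \<ge> 0" "mr \<ge> 0" "k * m = -(ml * xl + mr * xr)"
    "\<bar>xl\<bar> \<le> B" "\<bar>xr\<bar> \<le> B"
  shows "ml * (M + xl + k)^2 + mr * (M + xr + k)^2 \<le> m * M^2 + m * B^2"
proof -
  have "ml * (M + xl + k)^2 + mr * (M + xr + k)^2
      = (ml + mr) * (M + k)^2 + 2 * (M + k) * (ml * xl + mr * xr) + ml * xl^2 + mr * xr^2"
    by (simp add: algebra_simps power2_eq_square)
  also have "\<dots> = m * M^2 - m * k^2 + ml * xl^2 + mr * xr^2"
  proof -
    have "ml * xl + mr * xr = - (k * m)" using assms(4) by simp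
    hence "2 * (M + k) * (ml * xl + mr * xr) = - 2 * (M + k) * k * m" by (simp add: algebra_simps)
    thus ?thesis using assms(1) by (simp add: algebra_simps power2_eq_square)
  qed
  also have "\<dots> \<le> m * M^2 + ml * B^2 + mr * B^2"
  proof -
    have "xl^2 \<le> B^2" "xr^2 \<le> B^2" using assms(5,6) by (metis abs_ge_zero power2_abs power_mono)+
    hence "ml * xl^2 \<le> ml * B^2" "mr * xr^2 \<le> mr * B^2" using assms(2,3) by (simp_all add: mult_left_mono)
    moreover have "m * k^2 \<ge> 0" using assms(1-3) by simp
    ultimately show ?thesis by linarith
  qed
  also have "\<dots> = m * M^2 + m * B^2" using assms(1) by (metis add.assoc distrib_right)
  finally show ?thesis .
qed



fun Acc :: "((nat \<times> nat) \<Rightarrow> real) \<Rightarrow> nat \<Rightarrow> (nat \<times> nat) \<Rightarrow> real" where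
  "Acc g 0 I = 0"
| "Acc g (Suc n) I = Acc g n (dparent I) + g (dparent I)"

locale tsetup =
  fixes \<mu> \<nu> :: "real measure" and T :: "(nat \<times> nat) set" and D :: real
  assumes tree: "is_tree T"
    and mu_borel: "sets \<mu> = sets borel" and mu_fin: "finite_measure \<mu>"
    and nu_borel: "sets \<nu> = sets borel" and nu_fin: "finite_measure \<nu>"
    and Apos: "measure \<mu> (dyset (tree_top T)) > 0" "measure \<nu> (dyset (tree_top T)) > 0"
    and D: "D \<ge> 1" and B: "doubling_on_tree \<mu> T D" "doubling_on_tree \<nu> T D"
begin

abbreviation "mu I \<equiv> measure \<mu> (dyset I)"
abbreviation "nu I \<equiv> measure \<nu> (dyset I)"
abbreviation "Tp \<equiv> tree_top T"

definition "c0 = ln (nu Tp) - ln (mu Tp)"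
definition "Lf I = ln (nu I) - ln (mu I) - c0"
definition "kl I = -(mu (dleft I) * (Lf (dleft I) - Lf I) + mu (dright I) * (Lf (dright I) - Lf I)) / mu I"
definition "A I = Acc kl (fst I - fst Tp) I"
definition "M I = Lf I + A I"

lemma dyset_sets: "dyset I \<in> sets \<mu>" "dyset I \<in> sets \<nu>"
  using mu_borel nu_borel by (cases I, simp add: dyset_eq)+

lemma mu_pos: "I \<in> T \<Longrightarrow> mu I > 0" using tree_pos[OF tree B(1) Apos(1) D] by blast
lemma nu_pos: "I \<in> T \<Longrightarrow> nu I > 0" using tree_pos[OF tree B(2) Apos(2) D] by blast

lemma mu_add: "mu I = mu (dleft I) + mu (dright I)"
  using finite_measure.finite_measure_Union[OF mu_fin dyset_sets(1) dyset_sets(1) dyset_split_disj] dyset_split[of I] by simp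
lemma nu_add: "nu I = nu (dleft I) + nu (dright I)"
  using finite_measure.finite_measure_Union[OF nu_fin dyset_sets(2) dyset_sets(2) dyset_split_disj] dyset_split[of I] by simp

lemma Lf_top: "Lf Tp = 0" by (simp add: Lf_def c0_def)
lemma A_top: "A Tp = 0" by (simp add: A_def)
lemma M_top: "M Tp = 0" by (simp add: M_def Lf_top A_top)

lemma A_child:
  assumes "J \<in> T" shows "A (dleft J) = A J + kl J" "A (dright J) = A J + kl J"
proof -
  have "fst Tp \<le> fst J" using tree_fst_ge[OF tree assms] .
  hence "fst (dleft J) - fst Tp = Suc (fst J - fst Tp)" "fst (dright J) - fst Tp = Suc (fst J - fst Tp)" by auto
  thus "A (dleft J) = A J + kl J" "A (dright J) = A J + kl J" unfolding A_def by simp_all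
qed

lemma node:
  assumes J: "J \<in> T" "J \<notin> leaves T"
  shows "0 \<le> kl J" "kl J \<le> D^2 * (Delta \<mu> \<nu> J)^2"
    "mu (dleft J) * (M (dleft J))^2 + mu (dright J) * (M (dright J))^2 \<le> mu J * (M J)^2 + D^2 * (mu J * (Delta \<mu> \<nu> J)^2)"
    "mu (dleft J) * A (dleft J) + mu (dright J) * A (dright J) = mu J * A J + mu J * kl J"
proof -
  have ch: "dleft J \<in> T" "dright J \<in> T" using tree_children[OF tree J] by auto
  have fstJ: "fst Tp \<le> fst J" using tree_fst_ge[OF tree J(1)] .
  have ntop: "dleft J \<noteq> Tp" "dright J \<noteq> Tp" using fstJ by (auto dest: arg_cong[of _ _ fst])
  have dbl: "mu J \<le> D * mu (dleft J)" "mu J \<le> D * mu (dright J)" "nu J \<le> D * nu (dleft J)" "nu J \<le> D * nu (dright J)"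
    using B ch ntop unfolding doubling_on_tree_def by (metis DiffI dparent_dleft dparent_dright singletonD)+
  have pm: "mu J > 0" "mu (dleft J) > 0" "mu (dright J) > 0" using mu_pos J(1) ch by auto
  have pn: "nu J > 0" "nu (dleft J) > 0" "nu (dright J) > 0" using nu_pos J(1) ch by auto
  define a where "a = mu (dleft J) / mu J"
  define b where "b = nu (dleft J) / nu J"
  have a1: "1 - a = mu (dright J) / mu J" unfolding a_def using mu_add[of J] pm by (simp add: field_simps)
  have b1: "1 - b = nu (dright J) / nu J" unfolding b_def using nu_add[of J] pn by (simp add: field_simps)
  have Dp: "D > 0" using D by simp
  have ge: "a \<ge> 1/D" "1 - a \<ge> 1/D" "b \<ge> 1/D" "1 - b \<ge> 1/D"
    unfolding a1 b1 unfolding a_def b_def using dbl pm pn Dp by (simp_all add: field_simps)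
  have xl: "Lf (dleft J) - Lf J = ln b - ln a"
    unfolding Lf_def a_def b_def using pm pn by (simp add: ln_div)
  have xr: "Lf (dright J) - Lf J = ln (1-b) - ln (1-a)"
    unfolding Lf_def a1 b1 using pm pn by (simp add: ln_div)
  have klJ: "kl J = -(a * (ln b - ln a) + (1-a) * (ln (1-b) - ln (1-a)))"
    unfolding kl_def xl xr a1 unfolding a_def using pm by (simp add: field_simps)
  have Del: "Delta \<mu> \<nu> J = \<bar>a - b\<bar>" unfolding Delta_def a_def b_def ..
  note kb = kl_bounds[OF Dp ge]
  show "0 \<le> kl J" using kb(3) klJ by simp
  show "kl J \<le> D^2 * (Delta \<mu> \<nu> J)^2" using kb(4) klJ Del by simp
  have Ml: "M (dleft J) = M J + (Lf (dleft J) - Lf J) + kl J" unfolding M_def A_child[OF J(1)] by simp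
  have Mr: "M (dright J) = M J + (Lf (dright J) - Lf J) + kl J" unfolding M_def A_child[OF J(1)] by simp
  have km: "kl J * mu J = -(mu (dleft J) * (Lf (dleft J) - Lf J) + mu (dright J) * (Lf (dright J) - Lf J))"
    unfolding kl_def using pm by simp
  have "mu (dleft J) * (M (dleft J))^2 + mu (dright J) * (M (dright J))^2 \<le> mu J * (M J)^2 + mu J * (D * \<bar>a - b\<bar>)^2"
    unfolding Ml Mr
    by (rule var_step[OF mu_add[of J, symmetric] _ _ km]) (use pm kb(1,2) xl xr in auto)
  thus "mu (dleft J) * (M (dleft J))^2 + mu (dright J) * (M (dright J))^2 \<le> mu J * (M J)^2 + D^2 * (mu J * (Delta \<mu> \<nu> J)^2)"
    unfolding Del by (simp add: power_mult_distrib algebra_simps)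
  show "mu (dleft J) * A (dleft J) + mu (dright J) * A (dright J) = mu J * A J + mu J * kl J"
    unfolding A_child[OF J(1)] using mu_add[of J] by (simp add: algebra_simps)
qed

end


context tsetup begin

abbreviation "L \<equiv> leaves T"

lemma sum_step:
  fixes \<phi> :: "nat \<times> nat \<Rightarrow> real"
  shows "(\<Sum>J\<in>Pset T (Suc n). \<phi> J) = (\<Sum>J\<in>Pset T n. \<phi> J) + (\<Sum>J\<in>Pset T n - L. \<phi> (dleft J) + \<phi> (dright J) - \<phi> J)"
proof -
  define P where "P = Pset T n"
  have fin: "finite P" unfolding P_def using Pset_finite[OF tree] .
  have fl: "\<And>J. J \<in> P \<inter> L \<Longrightarrow> fst J \<le> fst Tp + n" unfolding P_def using Pset_fst[OF tree] by simp
  have fnl: "\<And>J. J \<in> P - L \<Longrightarrow> fst J = fst Tp + n" unfolding P_def using Pset_fst_nl[OF tree] by simp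
  have d1: "(P \<inter> L) \<inter> dleft ` (P - L) = {}"
  proof (rule ccontr)
    assume "(P \<inter> L) \<inter> dleft ` (P - L) \<noteq> {}"
    then obtain x where x: "x \<in> (P \<inter> L) \<inter> dleft ` (P - L)" by (meson ex_in_conv)
    from IntD2[OF x] obtain J where J0: "J \<in> P - L" "x = dleft J" by (rule imageE)
    have J: "J \<in> P - L" "dleft J \<in> P \<inter> L" using J0 IntD1[OF x] by simp_all
    have "fst (dleft J) \<le> fst Tp + n" by (rule fl[OF J(2)])
    moreover have "fst J = fst Tp + n" by (rule fnl[OF J(1)])
    ultimately show False by simp
  qed
  have d2: "(P \<inter> L \<union> dleft ` (P - L)) \<inter> dright ` (P - L) = {}"
  proof (rule ccontr)
    assume "(P \<inter> L \<union> dleft ` (P - L)) \<inter> dright ` (P - L) \<noteq> {}"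
    then obtain x where x: "x \<in> (P \<inter> L \<union> dleft ` (P - L)) \<inter> dright ` (P - L)" by (meson ex_in_conv)
    from IntD2[OF x] obtain J where J0: "J \<in> P - L" "x = dright J" by (rule imageE)
    have J: "J \<in> P - L" "dright J \<in> P \<inter> L \<union> dleft ` (P - L)" using J0 IntD1[OF x] by simp_all
    show False
    proof (cases "dright J \<in> P \<inter> L")
      case True
      have "fst (dright J) \<le> fst Tp + n" by (rule fl[OF True])
      moreover have "fst J = fst Tp + n" by (rule fnl[OF J(1)])
      ultimately show False by simp
    next
      case False
      with J(2) have "dright J \<in> dleft ` (P - L)" by blast
      then obtain K where "dright J = dleft K" by blast
      thus False using dleft_ne_dright[of K J] by simp
    qed
  qed
  have fX: "finite (P \<inter> L)" "finite (dleft ` (P - L))" "finite (dright ` (P - L))" using fin by auto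
  have e0: "Pset T (Suc n) = P \<inter> L \<union> dleft ` (P - L) \<union> dright ` (P - L)"
    unfolding P_def by simp
  have e1: "(\<Sum>J\<in>P \<inter> L \<union> dleft ` (P - L) \<union> dright ` (P - L). \<phi> J)
      = (\<Sum>J\<in>P \<inter> L \<union> dleft ` (P - L). \<phi> J) + (\<Sum>J\<in>dright ` (P - L). \<phi> J)"
    by (rule sum.union_disjoint) (use fX d2 in auto)
  have e2: "(\<Sum>J\<in>P \<inter> L \<union> dleft ` (P - L). \<phi> J) = (\<Sum>J\<in>P \<inter> L. \<phi> J) + (\<Sum>J\<in>dleft ` (P - L). \<phi> J)"
    by (rule sum.union_disjoint) (use fX d1 in auto)
  have e3: "(\<Sum>J\<in>dleft ` (P - L). \<phi> J) = (\<Sum>J\<in>P - L. \<phi> (dleft J))"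
    by (rule sum.reindex_cong[where l=dleft]) (auto simp: inj_on_def dleft_inj)
  have e4: "(\<Sum>J\<in>dright ` (P - L). \<phi> J) = (\<Sum>J\<in>P - L. \<phi> (dright J))"
    by (rule sum.reindex_cong[where l=dright]) (auto simp: inj_on_def dright_inj)
  have e5: "(\<Sum>J\<in>P. \<phi> J) = (\<Sum>J\<in>P \<inter> L. \<phi> J) + (\<Sum>J\<in>P - L. \<phi> J)"
    using fin by (rule sum.Int_Diff)
  have e6: "(\<Sum>J\<in>P - L. \<phi> (dleft J) + \<phi> (dright J) - \<phi> J) = (\<Sum>J\<in>P - L. \<phi> (dleft J)) + (\<Sum>J\<in>P - L. \<phi> (dright J)) - (\<Sum>J\<in>P - L. \<phi> J)"
    by (simp only: sum.distrib sum_subtractf)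
  show ?thesis unfolding P_def[symmetric] e0 e1 e2 e3 e4 e5 e6 by simp
qed

definition "R n = (\<Sum>k<n. \<Sum>J\<in>Pset T k - L. mu J * (Delta \<mu> \<nu> J)^2)"

lemma Pset_T: "J \<in> Pset T n \<Longrightarrow> J \<in> T" using Pset_sub[OF tree] by blast

lemma main_ind: "(\<forall>J\<in>Pset T n. A J \<ge> 0) \<and> (\<Sum>J\<in>Pset T n. mu J * (M J)^2) \<le> D^2 * R n
    \<and> (\<Sum>J\<in>Pset T n. mu J * A J) \<le> D^2 * R n"
proof (induction n)
  case 0
  then show ?case by (simp add: A_top M_top R_def)
next
  case (Suc n)
  have Rs: "R (Suc n) = R n + (\<Sum>J\<in>Pset T n - L. mu J * (Delta \<mu> \<nu> J)^2)" by (simp add: R_def)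
  have nd: "\<And>J. J \<in> Pset T n - L \<Longrightarrow> J \<in> T \<and> J \<notin> L" using Pset_T by blast
  have i: "\<forall>J\<in>Pset T (Suc n). A J \<ge> 0"
  proof
    fix I assume "I \<in> Pset T (Suc n)"
    then obtain q where q: "q \<in> Pset T n" "(q \<in> L \<and> I = q) \<or> (q \<notin> L \<and> (I = dleft q \<or> I = dright q))"
      by (rule Pset_Suc_origin)
    have Aq: "A q \<ge> 0" using Suc.IH q(1) by blast
    show "A I \<ge> 0"
    proof (cases "q \<in> L")
      case True
      then show ?thesis using q(2) Aq by auto
    next
      case False
      then have "I = dleft q \<or> I = dright q" using q(2) by blast
      moreover have "kl q \<ge> 0" using node(1)[OF Pset_T[OF q(1)] False] .
      ultimately show ?thesis using A_child[OF Pset_T[OF q(1)]] Aq by auto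
    qed
  qed
  have ii: "(\<Sum>J\<in>Pset T (Suc n). mu J * (M J)^2) \<le> D^2 * R (Suc n)"
  proof -
    have "(\<Sum>J\<in>Pset T n - L. mu (dleft J) * (M (dleft J))^2 + mu (dright J) * (M (dright J))^2 - mu J * (M J)^2)
         \<le> (\<Sum>J\<in>Pset T n - L. D^2 * (mu J * (Delta \<mu> \<nu> J)^2))"
    proof (rule sum_mono)
      fix J assume "J \<in> Pset T n - L"
      from nd[OF this] have "J \<in> T" "J \<notin> L" by auto
      from node(3)[OF this] show "mu (dleft J) * (M (dleft J))^2 + mu (dright J) * (M (dright J))^2 - mu J * (M J)^2
         \<le> D^2 * (mu J * (Delta \<mu> \<nu> J)^2)" by simp
    qed
    moreover have "(\<Sum>J\<in>Pset T n - L. D^2 * (mu J * (Delta \<mu> \<nu> J)^2)) = D^2 * (\<Sum>J\<in>Pset T n - L. mu J * (Delta \<mu> \<nu> J)^2)"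
      by (simp add: sum_distrib_left)
    ultimately show ?thesis using Suc.IH unfolding sum_step Rs by (simp add: distrib_left)
  qed
  have iii: "(\<Sum>J\<in>Pset T (Suc n). mu J * A J) \<le> D^2 * R (Suc n)"
  proof -
    have "(\<Sum>J\<in>Pset T n - L. mu (dleft J) * A (dleft J) + mu (dright J) * A (dright J) - mu J * A J)
         \<le> (\<Sum>J\<in>Pset T n - L. D^2 * (mu J * (Delta \<mu> \<nu> J)^2))"
    proof (rule sum_mono)
      fix J assume J: "J \<in> Pset T n - L"
      have "mu J * kl J \<le> mu J * (D^2 * (Delta \<mu> \<nu> J)^2)"
        using node(2)[of J] nd[OF J] mu_pos[of J] by (intro mult_left_mono) auto
      thus "mu (dleft J) * A (dleft J) + mu (dright J) * A (dright J) - mu J * A J \<le> D^2 * (mu J * (Delta \<mu> \<nu> J)^2)"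
        using node(4)[of J] nd[OF J] by (simp add: algebra_simps)
    qed
    moreover have "(\<Sum>J\<in>Pset T n - L. D^2 * (mu J * (Delta \<mu> \<nu> J)^2)) = D^2 * (\<Sum>J\<in>Pset T n - L. mu J * (Delta \<mu> \<nu> J)^2)"
      by (simp add: sum_distrib_left)
    ultimately show ?thesis using Suc.IH unfolding sum_step Rs by (simp add: distrib_left)
  qed
  show ?case using i ii iii by blast
qed

end


lemma fin_sum_le_nn:
  fixes g :: "'a \<Rightarrow> real"
  assumes "finite F" "F \<subseteq> X" "\<And>x. g x \<ge> 0" "(\<integral>\<^sup>+ x. ennreal (g x) \<partial>count_space X) < \<infinity>"
  shows "(\<Sum>x\<in>F. g x) \<le> enn2real (\<integral>\<^sup>+ x. ennreal (g x) \<partial>count_space X)"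
proof -
  have "ennreal (\<Sum>x\<in>F. g x) = (\<Sum>x\<in>F. ennreal (g x))" using assms(3) by simp
  also have "\<dots> = (\<integral>\<^sup>+ x. ennreal (g x) \<partial>count_space F)" using assms(1) by (simp add: nn_integral_count_space_finite)
  also have "\<dots> = (\<integral>\<^sup>+ x. ennreal (g x) * indicator F x \<partial>count_space UNIV)"
    by (rule nn_integral_count_space_indicator) (simp add: NO_MATCH_def)
  also have "\<dots> \<le> (\<integral>\<^sup>+ x. ennreal (g x) * indicator X x \<partial>count_space UNIV)"
    using assms(2) by (intro nn_integral_mono) (auto split: split_indicator)
  also have "\<dots> = (\<integral>\<^sup>+ x. ennreal (g x) \<partial>count_space X)"
    by (rule nn_integral_count_space_indicator[symmetric]) (simp add: NO_MATCH_def)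
  finally have le: "ennreal (\<Sum>x\<in>F. g x) \<le> (\<integral>\<^sup>+ x. ennreal (g x) \<partial>count_space X)" .
  have "(\<Sum>x\<in>F. g x) = enn2real (ennreal (\<Sum>x\<in>F. g x))" using assms(3) by (simp add: sum_nonneg)
  also have "\<dots> \<le> enn2real (\<integral>\<^sup>+ x. ennreal (g x) \<partial>count_space X)"
  proof -
    have "(\<integral>\<^sup>+ x. ennreal (g x) \<partial>count_space X) < top" using assms(4) by simp
    thus ?thesis using enn2real_mono[OF le] by simp
  qed
  finally show ?thesis .
qed

context tsetup begin

lemma R_le_S:
  assumes sq: "(\<integral>\<^sup>+ I. ennreal ((Delta \<mu> \<nu> I)\<^sup>2 * mu I) \<partial>count_space (T - L)) < \<infinity>"
  shows "R n \<le> enn2real (\<integral>\<^sup>+ I. ennreal ((Delta \<mu> \<nu> I)\<^sup>2 * mu I) \<partial>count_space (T - L))"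
proof -
  define g where "g I = (Delta \<mu> \<nu> I)\<^sup>2 * mu I" for I
  have "R n = (\<Sum>k<n. \<Sum>J\<in>Pset T k - L. g J)" unfolding R_def g_def by (simp add: mult.commute)
  also have "\<dots> = (\<Sum>J\<in>(\<Union>k<n. Pset T k - L). g J)"
  proof (rule sum.UNION_disjoint[symmetric])
    show "finite {..<n}" by simp
    show "\<forall>k\<in>{..<n}. finite (Pset T k - L)" using Pset_finite[OF tree] by simp
    show "\<forall>i\<in>{..<n}. \<forall>j\<in>{..<n}. i \<noteq> j \<longrightarrow> (Pset T i - L) \<inter> (Pset T j - L) = {}"
    proof (intro ballI impI)
      fix i j :: nat assume "i \<noteq> j"
      show "(Pset T i - L) \<inter> (Pset T j - L) = {}"
      proof (rule ccontr)
        assume "(Pset T i - L) \<inter> (Pset T j - L) \<noteq> {}"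
        then obtain J where J: "J \<in> Pset T i - L" "J \<in> Pset T j - L" by (meson IntE ex_in_conv)
        have "fst J = fst Tp + i" using J(1) Pset_fst_nl[OF tree] by blast
        moreover have "fst J = fst Tp + j" using J(2) Pset_fst_nl[OF tree] by blast
        ultimately have "i = j" by simp
        thus False using \<open>i \<noteq> j\<close> by simp
      qed
    qed
  qed
  also have "\<dots> \<le> enn2real (\<integral>\<^sup>+ I. ennreal (g I) \<partial>count_space (T - L))"
  proof (rule fin_sum_le_nn)
    show "finite (\<Union>k<n. Pset T k - L)" using Pset_finite[OF tree] by simp
    show "(\<Union>k<n. Pset T k - L) \<subseteq> T - L" using Pset_sub[OF tree] by blast
    show "\<And>x. g x \<ge> 0" unfolding g_def by simp
    show "(\<integral>\<^sup>+ I. ennreal (g I) \<partial>count_space (T - L)) < \<infinity>" using sq unfolding g_def .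
  qed
  finally show ?thesis unfolding g_def .
qed

lemma R_nonneg: "R n \<ge> 0" unfolding R_def by (intro sum_nonneg) simp

lemma markov:
  assumes lam: "t > 0"
  shows "(\<Sum>J\<in>{J\<in>Pset T n. Lf J < -2*t}. mu J) \<le> D^2 * R n / t^2 + D^2 * R n / t"
proof -
  define P where "P = Pset T n"
  have fin: "finite P" unfolding P_def using Pset_finite[OF tree] .
  have mu0: "\<And>J. mu J \<ge> 0" by simp
  note mi = main_ind[of n]
  have Apos: "\<And>J. J \<in> P \<Longrightarrow> A J \<ge> 0" using mi unfolding P_def by blast
  define S1 where "S1 = {J\<in>P. t^2 \<le> (M J)^2}"
  define S2 where "S2 = {J\<in>P. t \<le> A J}"
  have sub: "{J\<in>P. Lf J < -2*t} \<subseteq> S1 \<union> S2"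
  proof
    fix J assume J: "J \<in> {J\<in>P. Lf J < -2*t}"
    show "J \<in> S1 \<union> S2"
    proof (cases "t \<le> A J")
      case True then show ?thesis using J unfolding S2_def by simp
    next
      case False
      hence "M J < -t" using J unfolding M_def by simp
      hence "t \<le> \<bar>M J\<bar>" by simp
      hence "t^2 \<le> (M J)^2" using lam by (metis abs_of_pos power2_abs power_mono less_imp_le)
      then show ?thesis using J unfolding S1_def by simp
    qed
  qed
  have fS: "finite S1" "finite S2" using fin unfolding S1_def S2_def by simp_all
  have "(\<Sum>J\<in>{J\<in>P. Lf J < -2*t}. mu J) \<le> (\<Sum>J\<in>S1 \<union> S2. mu J)"
    by (rule sum_mono2) (use fS sub in auto)
  also have "\<dots> \<le> (\<Sum>J\<in>S1. mu J) + (\<Sum>J\<in>S2. mu J)"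
    using sum_Un[OF fS, of mu] sum_nonneg[of "S1 \<inter> S2" mu] by simp
  also have "(\<Sum>J\<in>S1. mu J) \<le> (\<Sum>J\<in>P. mu J * (M J)^2) / t^2"
  proof -
    have "(\<Sum>J\<in>S1. mu J) \<le> (\<Sum>J\<in>S1. mu J * (M J)^2 / t^2)"
    proof (rule sum_mono)
      fix J assume "J \<in> S1"
      hence "1 \<le> (M J)^2 / t^2" unfolding S1_def using lam by simp
      hence "mu J * 1 \<le> mu J * ((M J)^2 / t^2)" by (intro mult_left_mono) auto
      thus "mu J \<le> mu J * (M J)^2 / t^2" by simp
    qed
    also have "\<dots> \<le> (\<Sum>J\<in>P. mu J * (M J)^2 / t^2)"
      by (rule sum_mono2) (use fin in \<open>auto simp: S1_def\<close>)
    also have "\<dots> = (\<Sum>J\<in>P. mu J * (M J)^2) / t^2" by (simp add: sum_divide_distrib)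
    finally show ?thesis .
  qed
  also have "(\<Sum>J\<in>S2. mu J) \<le> (\<Sum>J\<in>P. mu J * A J) / t"
  proof -
    have "(\<Sum>J\<in>S2. mu J) \<le> (\<Sum>J\<in>S2. mu J * A J / t)"
    proof (rule sum_mono)
      fix J assume "J \<in> S2"
      hence "1 \<le> A J / t" unfolding S2_def using lam by simp
      hence "mu J * 1 \<le> mu J * (A J / t)" by (intro mult_left_mono) auto
      thus "mu J \<le> mu J * A J / t" by simp
    qed
    also have "\<dots> \<le> (\<Sum>J\<in>P. mu J * A J / t)"
      by (rule sum_mono2) (use fin Apos lam in \<open>auto simp: S2_def\<close>)
    also have "\<dots> = (\<Sum>J\<in>P. mu J * A J) / t" by (simp add: sum_divide_distrib)
    finally show ?thesis .
  qed
  finally have "(\<Sum>J\<in>{J\<in>P. Lf J < -2*t}. mu J) \<le> (\<Sum>J\<in>P. mu J * (M J)^2) / t^2 + (\<Sum>J\<in>P. mu J * A J) / t"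
    by simp
  moreover have "(\<Sum>J\<in>P. mu J * (M J)^2) / t^2 \<le> D^2 * R n / t^2"
    using mi lam unfolding P_def by (intro divide_right_mono) auto
  moreover have "(\<Sum>J\<in>P. mu J * A J) / t \<le> D^2 * R n / t"
    using mi lam unfolding P_def by (intro divide_right_mono) auto
  ultimately show ?thesis unfolding P_def by linarith
qed

end


context tsetup begin

lemma boundary_null_closed:
  assumes sq: "(\<integral>\<^sup>+ I. ennreal ((Delta \<mu> \<nu> I)\<^sup>2 * mu I) \<partial>count_space (T - L)) < \<infinity>"
    and K: "closed K" "K \<subseteq> tree_boundary T" "measure \<nu> K = 0"
  shows "measure \<mu> K = 0"
proof -
  interpret mu: finite_measure \<mu> by (rule mu_fin)
  interpret nu: finite_measure \<nu> by (rule nu_fin)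
  define S where "S = enn2real (\<integral>\<^sup>+ I. ennreal ((Delta \<mu> \<nu> I)\<^sup>2 * mu I) \<partial>count_space (T - L))"
  have RS: "\<And>n. R n \<le> S" unfolding S_def by (rule R_le_S[OF sq])
  have S0: "S \<ge> 0" using RS[of 0] R_nonneg[of 0] by linarith
  have Kb: "K \<in> sets borel" using K(1) by (simp add: borel_closed)
  have Kmu: "K \<in> sets \<mu>" "K \<in> sets \<nu>" using Kb mu_borel nu_borel by auto
  have noleaf: "\<And>J y. y \<in> K \<Longrightarrow> y \<in> dyset J \<Longrightarrow> J \<notin> L"
    using K(2) unfolding tree_boundary_def by blast
  define Q where "Q n = {J \<in> Pset T n. dyset J \<inter> K \<noteq> {}}" for n
  define U where "U n = (\<Union>J\<in>Q n. dyset J)" for n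
  have finQ: "finite (Q n)" for n unfolding Q_def using Pset_finite[OF tree] by simp
  have QT: "J \<in> Q n \<Longrightarrow> J \<in> T" for J n unfolding Q_def using Pset_T by blast
  have Usets: "U n \<in> sets \<nu>" for n unfolding U_def using finQ dyset_sets(2) by blast
  have KU: "K \<subseteq> U n" for n
  proof
    fix x assume "x \<in> K"
    then obtain J where "J \<in> Pset T n - L" "x \<in> dyset J" using Pset_boundary[OF tree] K(2) by blast
    thus "x \<in> U n" unfolding U_def Q_def using \<open>x \<in> K\<close> by blast
  qed
  have dec: "decseq U"
  proof (rule decseq_SucI)
    fix n show "U (Suc n) \<subseteq> U n"
    proof
      fix x assume "x \<in> U (Suc n)"
      then obtain J where J: "J \<in> Pset T (Suc n)" "dyset J \<inter> K \<noteq> {}" "x \<in> dyset J" unfolding U_def Q_def by blast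
      obtain J' where J': "J' \<in> Pset T n" "dyset J \<subseteq> dyset J'" using Pset_Suc_sub[OF tree J(1)] by blast
      have "J' \<in> Q n" unfolding Q_def using J' J(2) by blast
      thus "x \<in> U n" unfolding U_def using J(3) J'(2) by blast
    qed
  qed
  have capK: "(\<Inter>n. U n) \<subseteq> K"
  proof
    fix x assume x: "x \<in> (\<Inter>n. U n)"
    have "\<forall>e>0. \<exists>y\<in>K. dist y x < e"
    proof (intro allI impI)
      fix e :: real assume "e > 0"
      obtain n where n: "(1/2::real)^n < e" using real_arch_pow_inv[OF \<open>e > 0\<close>, of "1/2"] by auto
      have "x \<in> U n" using x by blast
      then obtain J where J: "J \<in> Pset T n" "dyset J \<inter> K \<noteq> {}" "x \<in> dyset J" unfolding U_def Q_def by blast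
      then obtain y where y: "y \<in> dyset J" "y \<in> K" by blast
      have "J \<notin> L" using noleaf y by blast
      hence fJ: "fst J = fst Tp + n" using Pset_fst_nl[OF tree J(1)] by simp
      have "dist y x < 1 / 2^(fst J)" using dyset_diam[OF y(1) J(3)] by (simp add: dist_real_def)
      also have "\<dots> \<le> 1 / 2^n" unfolding fJ by (intro divide_left_mono) auto
      also have "\<dots> = (1/2)^n" by (simp add: power_one_over)
      finally have "dist y x < e" using n by linarith
      thus "\<exists>y\<in>K. dist y x < e" using y(2) by blast
    qed
    thus "x \<in> K" using closed_approachable[OF K(1)] by blast
  qed
  have lim: "(\<lambda>n. measure \<nu> (U n)) \<longlonglongrightarrow> measure \<nu> (\<Inter>n. U n)"
    using nu.finite_Lim_measure_decseq[of U] Usets dec by blast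
  have "measure \<nu> (\<Inter>n. U n) \<le> measure \<nu> K" using capK Kmu(2) by (rule nu.finite_measure_mono)
  hence lim0: "(\<lambda>n. measure \<nu> (U n)) \<longlonglongrightarrow> 0"
    using lim K(3) measure_nonneg[of \<nu> "\<Inter>n. U n"] by (metis antisym)
  show ?thesis
  proof (rule ccontr)
    assume ne: "measure \<mu> K \<noteq> 0"
    hence Kpos: "measure \<mu> K > 0" using measure_nonneg[of \<mu> K] by linarith
    define \<delta> where "\<delta> = measure \<mu> K / 3"
    have dpos: "\<delta> > 0" unfolding \<delta>_def using Kpos by simp
    define t where "t = max 1 (2 * D^2 * S / \<delta>)"
    have t1: "t \<ge> 1" and t2: "t \<ge> 2 * D^2 * S / \<delta>" unfolding t_def by auto
    have tpos: "t > 0" using t1 by simp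
    define Cst where "Cst = exp (2 * t - c0)"
    have Cpos: "Cst > 0" unfolding Cst_def by simp
    have ev: "\<forall>\<^sub>F n in sequentially. measure \<nu> (U n) < \<delta> / Cst"
      using order_tendstoD(2)[OF lim0] dpos Cpos by simp
    then obtain N where "\<forall>n\<ge>N. measure \<nu> (U n) < \<delta> / Cst" unfolding eventually_sequentially by blast
    then obtain n where nU: "measure \<nu> (U n) < \<delta> / Cst" by blast
    have small: "(\<Sum>J\<in>{J\<in>Pset T n. Lf J < -2*t}. mu J) \<le> \<delta>"
    proof -
      have "(\<Sum>J\<in>{J\<in>Pset T n. Lf J < -2*t}. mu J) \<le> D^2 * R n / t^2 + D^2 * R n / t"
        by (rule markov[OF tpos])
      also have "\<dots> \<le> D^2 * S / t + D^2 * S / t"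
      proof -
        have "D^2 * R n \<le> D^2 * S" using RS[of n] by (intro mult_left_mono) auto
        moreover have "D^2 * R n \<ge> 0" using R_nonneg[of n] by simp
        moreover have "t \<le> t^2" using t1 by (simp add: power2_eq_square)
        ultimately have "D^2 * R n / t^2 \<le> D^2 * S / t"
          using tpos by (smt (z3) divide_left_mono divide_right_mono mult_pos_pos zero_less_power)
        moreover have "D^2 * R n / t \<le> D^2 * S / t" using \<open>D^2 * R n \<le> D^2 * S\<close> tpos by (intro divide_right_mono) auto
        ultimately show ?thesis by linarith
      qed
      also have "\<dots> = 2 * D^2 * S / t" by simp
      also have "\<dots> \<le> \<delta>"
      proof (cases "S = 0")
        case True then show ?thesis using dpos by simp
      next
        case False
        hence "2 * D^2 * S > 0" using S0 D by simp
        moreover have "2 * D^2 * S / \<delta> \<le> t" by (rule t2)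
        ultimately show ?thesis using dpos tpos by (simp add: field_simps)
      qed
      finally show ?thesis .
    qed
    have big: "mu J \<le> Cst * nu J" if J: "J \<in> Q n" "\<not> Lf J < -2*t" for J
    proof -
      have pm: "mu J > 0" "nu J > 0" using mu_pos nu_pos QT[OF J(1)] by auto
      have "ln (mu J) \<le> ln (nu J) + (2 * t - c0)" using J(2) unfolding Lf_def by simp
      hence "mu J \<le> exp (ln (nu J) + (2 * t - c0))" using pm by (metis exp_le_cancel_iff exp_ln)
      also have "\<dots> = nu J * exp (2 * t - c0)" using pm by (simp add: exp_add)
      finally show ?thesis unfolding Cst_def by (simp add: mult.commute)
    qed
    define B where "B = {J. Lf J < -2*t}"
    have Umu: "U n \<in> sets \<mu>" unfolding U_def using finQ dyset_sets(1) by blast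
    have "measure \<mu> K \<le> measure \<mu> (U n)" using KU[of n] Umu by (rule mu.finite_measure_mono)
    also have "\<dots> \<le> (\<Sum>J\<in>Q n. mu J)" unfolding U_def
      by (rule mu.finite_measure_subadditive_finite) (use finQ dyset_sets(1) in auto)
    also have "\<dots> = (\<Sum>J\<in>Q n \<inter> B. mu J) + (\<Sum>J\<in>Q n - B. mu J)"
      by (rule sum.Int_Diff[OF finQ])
    also have "(\<Sum>J\<in>Q n \<inter> B. mu J) \<le> (\<Sum>J\<in>{J\<in>Pset T n. Lf J < -2*t}. mu J)"
      by (rule sum_mono2) (use Pset_finite[OF tree] in \<open>auto simp: Q_def B_def\<close>)
    also have "(\<Sum>J\<in>Q n - B. mu J) \<le> (\<Sum>J\<in>Q n - B. Cst * nu J)"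
      by (rule sum_mono) (use big in \<open>auto simp: B_def\<close>)
    also have "\<dots> \<le> (\<Sum>J\<in>Q n. Cst * nu J)"
      by (rule sum_mono2) (use finQ Cpos in auto)
    also have "\<dots> = Cst * measure \<nu> (U n)"
    proof -
      have "measure \<nu> (U n) = (\<Sum>J\<in>Q n. nu J)" unfolding U_def
      proof (rule nu.finite_measure_finite_Union)
        show "finite (Q n)" by (rule finQ)
        show "dyset ` Q n \<subseteq> sets \<nu>" using dyset_sets(2) by blast
        show "disjoint_family_on dyset (Q n)"
          unfolding disjoint_family_on_def Q_def using Pset_disj[OF tree] by blast
      qed
      thus ?thesis by (simp add: sum_distrib_left)
    qed
    finally have "measure \<mu> K \<le> \<delta> + Cst * measure \<nu> (U n)" using small by linarith
    moreover have "Cst * measure \<nu> (U n) < \<delta>" using nU Cpos by (simp add: field_simps)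
    ultimately show False unfolding \<delta>_def using Kpos by linarith
  qed
qed

end


lemma sets_measure_add: "sets (measure_add M N) = sets M"
  unfolding measure_add_def by (rule sigma_algebra.sets_measure_of_eq[OF sets.sigma_algebra_axioms])

lemma emeasure_measure_add:
  assumes "sets N = sets M" "A \<in> sets M"
  shows "emeasure (measure_add M N) A = emeasure M A + emeasure N A"
  unfolding measure_add_def
proof (rule emeasure_measure_of_sigma)
  show "sigma_algebra (space M) (sets M)" by (rule sets.sigma_algebra_axioms)
  show "positive (sets M) (\<lambda>A. emeasure M A + emeasure N A)" by (simp add: positive_def)
  show "countably_additive (sets M) (\<lambda>A. emeasure M A + emeasure N A)"
    unfolding countably_additive_def
  proof (intro allI impI)
    fix F :: "nat \<Rightarrow> _" assume F: "range F \<subseteq> sets M" "disjoint_family F" "\<Union> (range F) \<in> sets M"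
    have FN: "range F \<subseteq> sets N" using F(1) assms(1) by simp
    have "(\<Sum>i. emeasure M (F i) + emeasure N (F i)) = (\<Sum>i. emeasure M (F i)) + (\<Sum>i. emeasure N (F i))"
      by (rule suminf_add[symmetric]) auto
    also have "\<dots> = emeasure M (\<Union> (range F)) + emeasure N (\<Union> (range F))"
      using suminf_emeasure[OF F(1,2)] suminf_emeasure[OF FN F(2)] by simp
    finally show "(\<Sum>i. emeasure M (F i) + emeasure N (F i)) = emeasure M (\<Union> (range F)) + emeasure N (\<Union> (range F))" .
  qed
  show "A \<in> sets M" by fact
qed

context tsetup begin

lemma core:
  assumes sq: "(\<integral>\<^sup>+ I. ennreal ((Delta \<mu> \<nu> I)\<^sup>2 * mu I) \<partial>count_space (T - L)) < \<infinity>"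
    and E: "E \<in> sets borel" "E \<subseteq> tree_boundary T" "emeasure \<nu> E = 0"
  shows "emeasure \<mu> E = 0"
proof -
  interpret mu: finite_measure \<mu> by (rule mu_fin)
  interpret nu: finite_measure \<nu> by (rule nu_fin)
  have "emeasure \<mu> E = (SUP K \<in> {K. K \<subseteq> E \<and> compact K}. emeasure \<mu> K)"
    by (rule inner_regular[OF mu_borel _ E(1)]) simp
  also have "\<dots> = (SUP K \<in> {K. K \<subseteq> E \<and> compact K}. 0)"
  proof (rule SUP_cong[OF refl])
    fix K assume "K \<in> {K. K \<subseteq> E \<and> compact K}"
    hence K: "K \<subseteq> E" "compact K" by auto
    have cl: "closed K" using K(2) by (rule compact_imp_closed)
    have Kb: "K \<in> sets borel" using cl by (simp add: borel_closed)
    have "emeasure \<nu> K \<le> emeasure \<nu> E" using K(1) E(1) nu_borel by (intro emeasure_mono) auto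
    hence "emeasure \<nu> K = 0" using E(3) by simp
    hence "measure \<nu> K = 0" by (simp add: measure_def)
    hence "measure \<mu> K = 0" using boundary_null_closed[OF sq cl] K(1) E(2) by blast
    thus "emeasure \<mu> K = 0" using mu.emeasure_eq_measure[of K] by simp
  qed
  also have "\<dots> = 0"
  proof -
    have "{} \<in> {K. K \<subseteq> E \<and> compact K}" by simp
    hence "{K. K \<subseteq> E \<and> compact K} \<noteq> {}" by blast
    thus ?thesis by (rule SUP_const)
  qed
  finally show ?thesis .
qed

end



theorem mainTheorem7:
  fixes \<mu> \<nu> :: "real measure" and T :: "(nat \<times> nat) set" and D :: real
  assumes tree: "is_tree T"
    and mu_borel: "sets \<mu> = sets borel" and mu_fin: "finite_measure \<mu>"
    and mu_supp: "emeasure \<mu> (- {0..<1}) = 0"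
    and nu_borel: "sets \<nu> = sets borel" and nu_fin: "finite_measure \<nu>"
    and nu_supp: "emeasure \<nu> (- {0..<1}) = 0"
    and A: "measure \<mu> (dyset (tree_top T)) > 0" "measure \<nu> (dyset (tree_top T)) > 0"
    and D: "D \<ge> 1" and B: "doubling_on_tree \<mu> T D" "doubling_on_tree \<nu> T D"
    and sq: "(\<integral>\<^sup>+ I. ennreal ((Delta \<mu> \<nu> I)\<^sup>2 * measure \<mu> (dyset I))
               \<partial>count_space (T - leaves T)) < \<infinity>"
  shows "absolutely_continuous (nu_T \<mu> \<nu> T) (restr \<mu> (dyset (tree_top T)))
       \<and> absolutely_continuous \<nu> (restr \<mu> (tree_boundary T))"
proof -
  interpret tsetup \<mu> \<nu> T D
    by (rule tsetup.intro[OF tree mu_borel mu_fin nu_borel nu_fin A D B])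
  have dysb: "dyset I \<in> sets borel" for I by (cases I) (simp add: dyset_eq)
  have cntL: "countable (leaves T)" by (rule countableI_type)
  have bdb: "tree_boundary T \<in> sets borel"
    unfolding tree_boundary_def using cntL dysb by (intro sets.Diff sets.countable_UN') auto
  define c where "c I = measure \<nu> (dyset I) / measure \<mu> (dyset I)" for I
  define g where "g x = (\<integral>\<^sup>+ I. ennreal (c I) * indicator (dyset I) x \<partial>count_space (leaves T))" for x
  have nuT: "nu_T \<mu> \<nu> T = measure_add (restr \<nu> (tree_boundary T)) (density \<mu> g)"
    unfolding nu_T_def g_def c_def ..
  have gmeas: "g \<in> borel_measurable \<mu>"
  proof -
    interpret cs: sigma_finite_measure "count_space (leaves T)"
      by (rule sigma_finite_measure_count_space_countable[OF cntL])
    have "(\<lambda>p. (\<lambda>I p. ennreal (c I) * indicator (dyset I) (fst p)) (snd p) p) \<in> borel_measurable (\<mu> \<Otimes>\<^sub>M count_space (leaves T))"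
    proof (rule measurable_compose_countable'[OF _ _ cntL])
      fix I assume "I \<in> leaves T"
      have "dyset I \<in> sets \<mu>" using dysb mu_borel by simp
      thus "(\<lambda>p. ennreal (c I) * indicator (dyset I) (fst p)) \<in> borel_measurable (\<mu> \<Otimes>\<^sub>M count_space (leaves T))"
        by measurable
    next
      show "snd \<in> measurable (\<mu> \<Otimes>\<^sub>M count_space (leaves T)) (count_space (leaves T))" by simp
    qed
    hence "case_prod (\<lambda>x I. ennreal (c I) * indicator (dyset I) x) \<in> borel_measurable (\<mu> \<Otimes>\<^sub>M count_space (leaves T))"
      by (simp add: case_prod_beta')
    from cs.borel_measurable_nn_integral[OF this] show ?thesis unfolding g_def .
  qed
  have sets_nuT: "sets (nu_T \<mu> \<nu> T) = sets borel"
    unfolding nuT sets_measure_add restr_def using nu_borel by simp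
  have part1: "absolutely_continuous (nu_T \<mu> \<nu> T) (restr \<mu> (dyset (tree_top T)))"
    unfolding absolutely_continuous_def
  proof
    fix X assume X: "X \<in> null_sets (nu_T \<mu> \<nu> T)"
    have Xb: "X \<in> sets borel" using X sets_nuT by (metis null_setsD2)
    have "emeasure (nu_T \<mu> \<nu> T) X = emeasure (restr \<nu> (tree_boundary T)) X + emeasure (density \<mu> g) X"
      unfolding nuT by (rule emeasure_measure_add) (use Xb mu_borel nu_borel in \<open>auto simp: restr_def\<close>)
    hence z: "emeasure (restr \<nu> (tree_boundary T)) X = 0" "emeasure (density \<mu> g) X = 0"
      using X by auto
    have "emeasure \<nu> (tree_boundary T \<inter> X) = 0"
      using z(1) unfolding restr_def using emeasure_restricted[of "tree_boundary T" \<nu> X] bdb Xb nu_borel by simp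
    hence n1: "emeasure \<mu> (tree_boundary T \<inter> X) = 0"
      by (intro core[OF sq]) (use bdb Xb in auto)
    have n2: "emeasure \<mu> (dyset I \<inter> X) = 0" if I: "I \<in> leaves T" for I
    proof -
      have IT: "I \<in> T" using I leaves_sub by blast
      have cpos: "c I > 0" unfolding c_def using mu_pos[OF IT] nu_pos[OF IT] by simp
      have DX: "dyset I \<inter> X \<in> sets \<mu>" using dysb Xb mu_borel by simp
      have "ennreal (c I) * emeasure \<mu> (dyset I \<inter> X) = (\<integral>\<^sup>+ x. ennreal (c I) * indicator (dyset I \<inter> X) x \<partial>\<mu>)"
        by (rule nn_integral_cmult_indicator[symmetric, OF DX])
      also have "\<dots> \<le> (\<integral>\<^sup>+ x. g x * indicator X x \<partial>\<mu>)"
      proof (rule nn_integral_mono)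
        fix x
        have "ennreal (c I) * indicator (dyset I) x \<le> g x"
          unfolding g_def by (rule nn_integral_ge_point[OF I, where p="\<lambda>I. ennreal (c I) * indicator (dyset I) x"])
        thus "ennreal (c I) * indicator (dyset I \<inter> X) x \<le> g x * indicator X x"
          by (auto split: split_indicator)
      qed
      also have "\<dots> = emeasure (density \<mu> g) X"
        by (rule emeasure_density[symmetric]) (use gmeas Xb mu_borel in auto)
      also have "\<dots> = 0" by (rule z(2))
      finally have "ennreal (c I) * emeasure \<mu> (dyset I \<inter> X) = 0" by simp
      thus ?thesis using cpos by simp
    qed
    have "(\<Union>I\<in>leaves T. dyset I \<inter> X) \<in> null_sets \<mu>"
      by (rule null_sets_UN'[OF cntL]) (use n2 dysb Xb mu_borel in auto)
    moreover have "tree_boundary T \<inter> X \<in> null_sets \<mu>" using n1 bdb Xb mu_borel by auto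
    ultimately have un: "(tree_boundary T \<inter> X) \<union> (\<Union>I\<in>leaves T. dyset I \<inter> X) \<in> null_sets \<mu>"
      by (rule null_sets.Un[rotated])
    have "dyset (tree_top T) \<inter> X \<in> null_sets \<mu>"
      by (rule null_sets_subset[OF un]) (use dysb Xb mu_borel in \<open>auto simp: tree_boundary_def\<close>)
    hence "emeasure (restr \<mu> (dyset (tree_top T))) X = 0"
      unfolding restr_def using emeasure_restricted[of "dyset (tree_top T)" \<mu> X] dysb Xb mu_borel by auto
    moreover have "X \<in> sets (restr \<mu> (dyset (tree_top T)))" unfolding restr_def using Xb mu_borel by simp
    ultimately show "X \<in> null_sets (restr \<mu> (dyset (tree_top T)))" by blast
  qed
  have part2: "absolutely_continuous \<nu> (restr \<mu> (tree_boundary T))"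
    unfolding absolutely_continuous_def
  proof
    fix X assume X: "X \<in> null_sets \<nu>"
    have Xb: "X \<in> sets borel" using X nu_borel by (metis null_setsD2)
    have "emeasure \<nu> (tree_boundary T \<inter> X) \<le> emeasure \<nu> X"
      by (rule emeasure_mono) (use Xb nu_borel in auto)
    hence "emeasure \<nu> (tree_boundary T \<inter> X) = 0" using X by auto
    hence "emeasure \<mu> (tree_boundary T \<inter> X) = 0"
      by (intro core[OF sq]) (use bdb Xb in auto)
    hence "emeasure (restr \<mu> (tree_boundary T)) X = 0"
      unfolding restr_def using emeasure_restricted[of "tree_boundary T" \<mu> X] bdb Xb mu_borel by auto
    moreover have "X \<in> sets (restr \<mu> (tree_boundary T))" unfolding restr_def using Xb mu_borel by simp
    ultimately show "X \<in> null_sets (restr \<mu> (tree_boundary T))" by blast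
  qed
  show ?thesis using part1 part2 by blast
qed


end
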